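(* Consider two hypotheses $\mathrm{H}_0,\mathrm{H}_1$ with prior probabilities $P(\mathrm{H}_0),P(\mathrm{H}_1)$, where under $\mathrm{H}_i$ the parameter is restricted to a grid $\theta_i^{[1]},\dots,\theta_i^{[N_i]}$ with spacing $\Delta\theta_i$ and prior weights $p(\theta_i^{[n]}\mid\mathrm{H}_i)\Delta\theta_i$, and for each grid point the conditional density of $\mathbf{X}$ lies in a convex uncertainty set $\mathcal{P}_{i,\theta_i^{[n]}}$; let $\mathbb{P}_i=\prod_{n=1}^{N_i}\mathcal{P}_{i,\theta_i^{[n]}}$. For given $\lambda_i,\mu_i\ge0$, $i\in\{0,1\}$, the least favorable distributions maximizing the cost $J^{\mathrm{NP}}_{\mathrm u}=\sum_{i=0}^1P(\mathrm{H}_i)\bigl(\lambda_i\alpha_i(\pi,\boldsymbol p^{\mathrm D}_i)+\mu_i\beta_i(\pi,\boldsymbol p^{\mathrm E}_i)\bigr)$ (over four vectors of distributions $\boldsymbol P^{\mathrm D}_0,\boldsymbol P^{\mathrm E}_0\in\mathbb{P}_0$, $\boldsymbol P^{\mathrm D}_1,\boldsymbol P^{\mathrm E}_1\in\mathbb{P}_1$) are given by $$\boldsymbol Q=(\boldsymbol Q^{\mathrm D}_0,\boldsymbol Q^{\mathrm D}_1,\boldsymbol Q^{\mathrm E}_0,\boldsymbol Q^{\mathrm E}_1)=\operatorname*{arg\,max}_{\boldsymbol P^{\mathrm D}_0,\boldsymbol P^{\mathrm E}_0\in\mathbb{P}_0,\ \boldsymbol P^{\mathrm D}_1,\boldsymbol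 P^{\mathrm E}_1\in\mathbb{P}_1}D_{\rho^{\mathrm{NP}}}(\boldsymbol P^{\mathrm D}_0,\boldsymbol P^{\mathrm D}_1,\boldsymbol P^{\mathrm E}_0,\boldsymbol P^{\mathrm E}_1),$$ where $D_{\rho^{\mathrm{NP}}}(\boldsymbol P^{\mathrm D}_0,\boldsymbol P^{\mathrm D}_1,\boldsymbol P^{\mathrm E}_0,\boldsymbol P^{\mathrm E}_1)=\int\rho^{\mathrm{NP}}(\boldsymbol p^{\mathrm D}_0(\mathbf{x}),\boldsymbol p^{\mathrm D}_1(\mathbf{x}),\boldsymbol p^{\mathrm E}_0(\mathbf{x}),\boldsymbol p^{\mathrm E}_1(\mathbf{x}))\,\mathrm{d}\mathbf{x}$ is the $f$-similarity induced by $\rho^{\mathrm{NP}}=\min\{\tilde D_0^{\mathrm{NP}},\tilde D_1^{\mathrm{NP}}\}$ with $$\tilde D_i^{\mathrm{NP}}(\boldsymbol s^{\mathrm D}_0,\boldsymbol s^{\mathrm D}_1,\boldsymbol s^{\mathrm E}_0,\boldsymbol s^{\mathrm E}_1)=\mu_iP(\mathrm{H}_i)\boldsymbol a_i^\top\boldsymbol s^{\mathrm E}_i-\mu_iP(\mathrm{H}_i)\frac{(\boldsymbol b_i^\top\boldsymbol s^{\mathrm E}_i)^2}{\boldsymbol c_i^\top\boldsymbol s^{\mathrm E}_i}+\lambda_{1-i}P(\mathrm{H}_{1-i})\boldsymbol c_{1-i}^\top\boldsymbol s^{\mathrm D}_{1-i},$$ $[\boldsymbol a_i]_n=(\theta_i^{[n]})^2p(\theta_i^{[n]}\mid\mathrm{H}_i)\Delta\theta_i$,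 $[\boldsymbol b_i]_n=\theta_i^{[n]}p(\theta_i^{[n]}\mid\mathrm{H}_i)\Delta\theta_i$, $[\boldsymbol c_i]_n=p(\theta_i^{[n]}\mid\mathrm{H}_i)\Delta\theta_i$.
   Context: A policy $\pi=(\delta,\hat\theta_0,\hat\theta_1)$ consists of a randomized decision rule $\delta$ with values in $[0,1]$ (probability of accepting $\mathrm{H}_1$) and estimators $\hat\theta_i$. Here $\boldsymbol p^{\mathrm D}_i=(p^{\mathrm D}_{i,\theta_i^{[1]}},\dots,p^{\mathrm D}_{i,\theta_i^{[N_i]}})$ and similarly $\boldsymbol p^{\mathrm E}_i$ are vectors of conditional densities with distributions $\boldsymbol P^{\mathrm D}_i,\boldsymbol P^{\mathrm E}_i$. With parameter integrals replaced by grid sums: $\alpha_0=\mathbb{E}[\delta\mid\mathrm{H}_0]$, $\alpha_1=\mathbb{E}[1-\delta\mid\mathrm{H}_1]$ computed with $\boldsymbol p^{\mathrm D}_i$; $\beta_0=\mathbb{E}[(1-\delta)(\hat\theta_0-\Theta_0)^2\mid\mathrm{H}_0]$, $\beta_1=\mathbb{E}[\delta(\hat\theta_1-\Theta_1)^2\mid\mathrm{H}_1]$ computed with $\boldsymbol p^{\mathrm E}_i$. "Least favorable" means maximizing the cost attained by the cost-minimizing policy, i.e. maximizing $\min_\pi J^{\mathrm{NP}}_{\mathrm u}$. For a continuous, concave, positively homogeneous function $f$ on $\mathbb{R}^N_{\ge0}$ and distributions with densities $p_1,\dots,p_N$, the $f$-similarity is $D_f=\int f(p_1(\mathbf{x}),\dots,p_N(\mathbf{x}))\,\mathrm{d}\mathbf{x}$.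 *)

theory Defs
  imports "HOL-Analysis.Analysis"
begin

text \<open>Hypothesis index i ranges over {0,1} (type nat).
  N i = number of grid points under H_i; th i n = grid point theta_i^[n] (n < N i);
  pr i n = prior density value p(theta_i^[n] | H_i); Dl i = grid spacing;
  PH i = prior probability P(H_i); lam i, mu i = cost weights. A vector of densities under H_i is P i n (n < N i).\<close>

definition is_density :: "('a::euclidean_space \<Rightarrow> real) \<Rightarrow> bool" where
  "is_density p \<longleftrightarrow> p \<in> borel_measurable lborel \<and> (\<forall>x. 0 \<le> p x)
      \<and> integrable lborel p \<and> integral\<^sup>L lborel p = 1"

definition convex_fun_set :: "('a \<Rightarrow> real) set \<Rightarrow> bool" where
  "convex_fun_set S \<longleftrightarrow>
     (\<forall>p\<in>S. \<forall>q\<in>S. \<forall>t::real. 0 \<le> t \<and> t \<le> 1 \<longrightarrow> (\<lambda>x. t * p x + (1 - t) * q x) \<in> S)"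

definition avec :: "(nat \<Rightarrow> nat \<Rightarrow> real) \<Rightarrow> (nat \<Rightarrow> nat \<Rightarrow> real) \<Rightarrow> (nat \<Rightarrow> real) \<Rightarrow> nat \<Rightarrow> nat \<Rightarrow> real" where
  "avec th pr Dl i n = (th i n)\<^sup>2 * pr i n * Dl i"

definition bvec :: "(nat \<Rightarrow> nat \<Rightarrow> real) \<Rightarrow> (nat \<Rightarrow> nat \<Rightarrow> real) \<Rightarrow> (nat \<Rightarrow> real) \<Rightarrow> nat \<Rightarrow> nat \<Rightarrow> real" where
  "bvec th pr Dl i n = th i n * pr i n * Dl i"

definition cvec :: "(nat \<Rightarrow> nat \<Rightarrow> real) \<Rightarrow> (nat \<Rightarrow> real) \<Rightarrow> nat \<Rightarrow> nat \<Rightarrow> real" where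
  "cvec pr Dl i n = pr i n * Dl i"

text \<open>Probability of accepting H_1 is d x. "Decision for H_i" indicator: g i x.\<close>
definition acc :: "('a \<Rightarrow> real) \<Rightarrow> nat \<Rightarrow> 'a \<Rightarrow> real" where
  "acc d i x = (if i = 0 then d x else 1 - d x)"

definition alpha_err ::
  "(nat \<Rightarrow> nat) \<Rightarrow> (nat \<Rightarrow> nat \<Rightarrow> real) \<Rightarrow> (nat \<Rightarrow> real) \<Rightarrow> ('a::euclidean_space \<Rightarrow> real)
     \<Rightarrow> (nat \<Rightarrow> nat \<Rightarrow> 'a \<Rightarrow> real) \<Rightarrow> nat \<Rightarrow> real" where
  "alpha_err N pr Dl d PD i =
     (\<Sum>n<N i. cvec pr Dl i n * (LINT x|lborel. acc d i x * PD i n x))"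

definition beta_err ::
  "(nat \<Rightarrow> nat) \<Rightarrow> (nat \<Rightarrow> nat \<Rightarrow> real) \<Rightarrow> (nat \<Rightarrow> nat \<Rightarrow> real) \<Rightarrow> (nat \<Rightarrow> real)
     \<Rightarrow> ('a::euclidean_space \<Rightarrow> real) \<Rightarrow> (nat \<Rightarrow> 'a \<Rightarrow> real)
     \<Rightarrow> (nat \<Rightarrow> nat \<Rightarrow> 'a \<Rightarrow> real) \<Rightarrow> nat \<Rightarrow> real" where
  "beta_err N th pr Dl d est PE i =
     (\<Sum>n<N i. cvec pr Dl i n *
        (LINT x|lborel. (1 - acc d i x) * (est i x - th i n)\<^sup>2 * PE i n x))"

definition J_NP ::
  "(nat \<Rightarrow> nat) \<Rightarrow> (nat \<Rightarrow> nat \<Rightarrow> real) \<Rightarrow> (nat \<Rightarrow> nat \<Rightarrow> real) \<Rightarrow> (nat \<Rightarrow> real)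
     \<Rightarrow> (nat \<Rightarrow> real) \<Rightarrow> (nat \<Rightarrow> real) \<Rightarrow> (nat \<Rightarrow> real)
     \<Rightarrow> ('a::euclidean_space \<Rightarrow> real) \<Rightarrow> (nat \<Rightarrow> 'a \<Rightarrow> real)
     \<Rightarrow> (nat \<Rightarrow> nat \<Rightarrow> 'a \<Rightarrow> real) \<Rightarrow> (nat \<Rightarrow> nat \<Rightarrow> 'a \<Rightarrow> real) \<Rightarrow> real" where
  "J_NP N th pr Dl PH lam mu d est PD PE =
     (\<Sum>i<2. PH i * (lam i * alpha_err N pr Dl d PD i + mu i * beta_err N th pr Dl d est PE i))"

definition admissible ::
  "(nat \<Rightarrow> nat) \<Rightarrow> (nat \<Rightarrow> nat \<Rightarrow> real) \<Rightarrow> (nat \<Rightarrow> nat \<Rightarrow> 'a \<Rightarrow> real) \<Rightarrow> (nat \<Rightarrow> nat \<Rightarrow> 'a \<Rightarrow> real)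
     \<Rightarrow> ('a::euclidean_space \<Rightarrow> real) \<Rightarrow> (nat \<Rightarrow> 'a \<Rightarrow> real) \<Rightarrow> bool" where
  "admissible N th PD PE d est \<longleftrightarrow>
     d \<in> borel_measurable lborel \<and> (\<forall>x. 0 \<le> d x \<and> d x \<le> 1) \<and>
     (\<forall>i<2. est i \<in> borel_measurable lborel) \<and>
     (\<forall>i<2. \<forall>n<N i. integrable lborel (\<lambda>x. acc d i x * PD i n x)) \<and>
     (\<forall>i<2. \<forall>n<N i. integrable lborel (\<lambda>x. (1 - acc d i x) * (est i x - th i n)\<^sup>2 * PE i n x))"

definition J_min ::
  "(nat \<Rightarrow> nat) \<Rightarrow> (nat \<Rightarrow> nat \<Rightarrow> real) \<Rightarrow> (nat \<Rightarrow> nat \<Rightarrow> real) \<Rightarrow> (nat \<Rightarrow> real)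
     \<Rightarrow> (nat \<Rightarrow> real) \<Rightarrow> (nat \<Rightarrow> real) \<Rightarrow> (nat \<Rightarrow> real)
     \<Rightarrow> (nat \<Rightarrow> nat \<Rightarrow> 'a::euclidean_space \<Rightarrow> real) \<Rightarrow> (nat \<Rightarrow> nat \<Rightarrow> 'a \<Rightarrow> real) \<Rightarrow> real" where
  "J_min N th pr Dl PH lam mu PD PE =
     (INF p \<in> {(d, est). admissible N th PD PE d est}.
        J_NP N th pr Dl PH lam mu (fst p) (snd p) PD PE)"

text \<open>tilde D_i^NP evaluated at vectors sD, sE (sD i n = [s^D_i]_n).\<close>
definition Dtil ::
  "(nat \<Rightarrow> nat) \<Rightarrow> (nat \<Rightarrow> nat \<Rightarrow> real) \<Rightarrow> (nat \<Rightarrow> nat \<Rightarrow> real) \<Rightarrow> (nat \<Rightarrow> real)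
     \<Rightarrow> (nat \<Rightarrow> real) \<Rightarrow> (nat \<Rightarrow> real) \<Rightarrow> (nat \<Rightarrow> real)
     \<Rightarrow> nat \<Rightarrow> (nat \<Rightarrow> nat \<Rightarrow> real) \<Rightarrow> (nat \<Rightarrow> nat \<Rightarrow> real) \<Rightarrow> real" where
  "Dtil N th pr Dl PH lam mu i sD sE =
     mu i * PH i * (\<Sum>n<N i. avec th pr Dl i n * sE i n)
     - mu i * PH i * (\<Sum>n<N i. bvec th pr Dl i n * sE i n)\<^sup>2
                    / (\<Sum>n<N i. cvec pr Dl i n * sE i n)
     + lam (1 - i) * PH (1 - i) * (\<Sum>n<N (1 - i). cvec pr Dl (1 - i) n * sD (1 - i) n)"

definition rho_NP ::
  "(nat \<Rightarrow> nat) \<Rightarrow> (nat \<Rightarrow> nat \<Rightarrow> real) \<Rightarrow> (nat \<Rightarrow> nat \<Rightarrow> real) \<Rightarrow> (nat \<Rightarrow> real)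
     \<Rightarrow> (nat \<Rightarrow> real) \<Rightarrow> (nat \<Rightarrow> real) \<Rightarrow> (nat \<Rightarrow> real)
     \<Rightarrow> (nat \<Rightarrow> nat \<Rightarrow> real) \<Rightarrow> (nat \<Rightarrow> nat \<Rightarrow> real) \<Rightarrow> real" where
  "rho_NP N th pr Dl PH lam mu sD sE =
     min (Dtil N th pr Dl PH lam mu 0 sD sE) (Dtil N th pr Dl PH lam mu 1 sD sE)"

definition D_rho_NP ::
  "(nat \<Rightarrow> nat) \<Rightarrow> (nat \<Rightarrow> nat \<Rightarrow> real) \<Rightarrow> (nat \<Rightarrow> nat \<Rightarrow> real) \<Rightarrow> (nat \<Rightarrow> real)
     \<Rightarrow> (nat \<Rightarrow> real) \<Rightarrow> (nat \<Rightarrow> real) \<Rightarrow> (nat \<Rightarrow> real)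
     \<Rightarrow> (nat \<Rightarrow> nat \<Rightarrow> 'a::euclidean_space \<Rightarrow> real) \<Rightarrow> (nat \<Rightarrow> nat \<Rightarrow> 'a \<Rightarrow> real) \<Rightarrow> real" where
  "D_rho_NP N th pr Dl PH lam mu PD PE =
     (LINT x|lborel. rho_NP N th pr Dl PH lam mu (\<lambda>i n. PD i n x) (\<lambda>i n. PE i n x))"

definition in_unc ::
  "(nat \<Rightarrow> nat) \<Rightarrow> (nat \<Rightarrow> nat \<Rightarrow> ('a \<Rightarrow> real) set)
     \<Rightarrow> (nat \<Rightarrow> nat \<Rightarrow> 'a \<Rightarrow> real) \<Rightarrow> (nat \<Rightarrow> nat \<Rightarrow> 'a \<Rightarrow> real) \<Rightarrow> bool" where
  "in_unc N U PD PE \<longleftrightarrow> (\<forall>i<2. \<forall>n<N i. PD i n \<in> U i n \<and> PE i n \<in> U i n)"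

end

theory Submission
  imports Defs
begin

lemma var_expand:
  fixes c s t :: "nat \<Rightarrow> real"
  shows "(\<Sum>n<K. c n * ((e - t n)\<^sup>2 * s n)) =
    e\<^sup>2 * (\<Sum>n<K. c n * s n) - 2 * e * (\<Sum>n<K. t n * c n * s n) + (\<Sum>n<K. (t n)\<^sup>2 * c n * s n)"
proof -
  have "(\<Sum>n<K. c n * ((e - t n)\<^sup>2 * s n)) = (\<Sum>n<K. e\<^sup>2 * (c n * s n) - 2 * e * (t n * c n * s n) + (t n)\<^sup>2 * c n * s n)"
    by (rule sum.cong) (auto simp: power2_eq_square algebra_simps)
  also have "\<dots> = e\<^sup>2 * (\<Sum>n<K. c n * s n) - 2 * e * (\<Sum>n<K. t n * c n * s n) + (\<Sum>n<K. (t n)\<^sup>2 * c n * s n)"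
    by (simp add: sum.distrib sum_subtractf sum_distrib_left)
  finally show ?thesis .
qed

lemma var_min:
  fixes c s t :: "nat \<Rightarrow> real"
  assumes c: "\<forall>n<K. 0 \<le> c n" and s: "\<forall>n<K. 0 \<le> s n"
  shows "(\<Sum>n<K. (t n)\<^sup>2 * c n * s n) - (\<Sum>n<K. t n * c n * s n)\<^sup>2 / (\<Sum>n<K. c n * s n)
          \<le> (\<Sum>n<K. c n * ((e - t n)\<^sup>2 * s n))"
    and "(\<Sum>n<K. (t n)\<^sup>2 * c n * s n) - (\<Sum>n<K. t n * c n * s n)\<^sup>2 / (\<Sum>n<K. c n * s n)
          = (\<Sum>n<K. c n * (((\<Sum>n<K. t n * c n * s n) / (\<Sum>n<K. c n * s n) - t n)\<^sup>2 * s n))"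
proof -
  define W where "W = (\<Sum>n<K. c n * s n)"
  define B where "B = (\<Sum>n<K. t n * c n * s n)"
  define A where "A = (\<Sum>n<K. (t n)\<^sup>2 * c n * s n)"
  have W0: "0 \<le> W" unfolding W_def using c s by (intro sum_nonneg) auto
  have "(A - B\<^sup>2 / W \<le> (\<Sum>n<K. c n * ((e - t n)\<^sup>2 * s n))) \<and>
        (A - B\<^sup>2 / W = (\<Sum>n<K. c n * ((B / W - t n)\<^sup>2 * s n)))"
  proof (cases "W = 0")
    case True
    have z: "\<forall>n<K. c n * s n = 0"
      using True unfolding W_def using c s
      by (subst (asm) sum_nonneg_eq_0_iff) auto
    have "A = 0" unfolding A_def using z by (intro sum.neutral) (simp add: mult.assoc)
    moreover have "B = 0" unfolding B_def using z by (intro sum.neutral) (simp add: mult.assoc)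
    moreover have ee: "(\<Sum>n<K. c n * ((e' - t n)\<^sup>2 * s n)) = 0" for e'
      using z by (intro sum.neutral) (auto simp: algebra_simps)
    moreover note ee[of "B / W"] ee[of e]
    ultimately show ?thesis using True by simp
  next
    case False
    then have Wp: "W > 0" using W0 by simp
    have ex: "(\<Sum>n<K. c n * ((e' - t n)\<^sup>2 * s n)) = e'\<^sup>2 * W - 2 * e' * B + A" for e'
      unfolding W_def B_def A_def by (rule var_expand)
    have id: "e'\<^sup>2 * W - 2 * e' * B + A = A - B\<^sup>2 / W + W * (e' - B / W)\<^sup>2" for e'
      using Wp by (simp add: field_simps power2_eq_square)
    have "(B / W)\<^sup>2 * W - 2 * (B / W) * B + A = A - B\<^sup>2 / W"
      using Wp by (simp add: field_simps power2_eq_square)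
    then show ?thesis using Wp by (simp add: ex id)
  qed
  then show "(\<Sum>n<K. (t n)\<^sup>2 * c n * s n) - (\<Sum>n<K. t n * c n * s n)\<^sup>2 / (\<Sum>n<K. c n * s n)
          \<le> (\<Sum>n<K. c n * ((e - t n)\<^sup>2 * s n))"
    and "(\<Sum>n<K. (t n)\<^sup>2 * c n * s n) - (\<Sum>n<K. t n * c n * s n)\<^sup>2 / (\<Sum>n<K. c n * s n)
          = (\<Sum>n<K. c n * (((\<Sum>n<K. t n * c n * s n) / (\<Sum>n<K. c n * s n) - t n)\<^sup>2 * s n))"
    unfolding A_def B_def W_def by auto
qed

definition GP :: "(nat \<Rightarrow> nat) \<Rightarrow> (nat \<Rightarrow> nat \<Rightarrow> real) \<Rightarrow> (nat \<Rightarrow> nat \<Rightarrow> real) \<Rightarrow> (nat \<Rightarrow> real)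
     \<Rightarrow> (nat \<Rightarrow> real) \<Rightarrow> (nat \<Rightarrow> real) \<Rightarrow> (nat \<Rightarrow> real) \<Rightarrow> real \<Rightarrow> (nat \<Rightarrow> real)
     \<Rightarrow> (nat \<Rightarrow> nat \<Rightarrow> real) \<Rightarrow> (nat \<Rightarrow> nat \<Rightarrow> real) \<Rightarrow> real" where
  "GP N th pr Dl PH lam mu dv e sD sE =
    (\<Sum>i<2. \<Sum>n<N i. PH i * lam i * cvec pr Dl i n * ((if i = 0 then dv else 1 - dv) * sD i n)
       + PH i * mu i * cvec pr Dl i n * ((1 - (if i = 0 then dv else 1 - dv)) * (e i - th i n)\<^sup>2 * sE i n))"

lemma sum2: "(\<Sum>i<(2::nat). f i) = f 0 + (f 1 :: real)"
  by (simp add: numeral_2_eq_2)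

lemma sum_aux: "(\<Sum>n<K. X * c n * (a * y n) + Y * c n * (b * u n * v n)) =
   X * a * (\<Sum>n<K. c n * y n) + Y * b * (\<Sum>n<K. c n * (u n * v n) :: real)"
  by (simp add: sum.distrib sum_distrib_left ac_simps)

lemma GP_eq: "GP N th pr Dl PH lam mu dv e sD sE =
   dv * (mu 1 * PH 1 * (\<Sum>n<N 1. cvec pr Dl 1 n * ((e 1 - th 1 n)\<^sup>2 * sE 1 n))
         + lam 0 * PH 0 * (\<Sum>n<N 0. cvec pr Dl 0 n * sD 0 n))
 + (1 - dv) * (mu 0 * PH 0 * (\<Sum>n<N 0. cvec pr Dl 0 n * ((e 0 - th 0 n)\<^sup>2 * sE 0 n))
         + lam 1 * PH 1 * (\<Sum>n<N 1. cvec pr Dl 1 n * sD 1 n))"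
  unfolding GP_def sum2 by (simp only: sum_aux if_True if_False one_neq_zero simp_thms) (simp add: algebra_simps)

lemma Dtil_eq: "i < 2 \<Longrightarrow> Dtil N th pr Dl PH lam mu i sD sE =
   mu i * PH i * ((\<Sum>n<N i. (th i n)\<^sup>2 * cvec pr Dl i n * sE i n) - (\<Sum>n<N i. th i n * cvec pr Dl i n * sE i n)\<^sup>2 / (\<Sum>n<N i. cvec pr Dl i n * sE i n))
   + lam (1 - i) * PH (1 - i) * (\<Sum>n<N (1 - i). cvec pr Dl (1 - i) n * sD (1 - i) n)"
  unfolding Dtil_def avec_def bvec_def cvec_def by (simp add: mult.assoc right_diff_distrib)

lemma Dtil0: "Dtil N th pr Dl PH lam mu 0 sD sE =
   mu 0 * PH 0 * ((\<Sum>n<N 0. (th 0 n)\<^sup>2 * cvec pr Dl 0 n * sE 0 n) - (\<Sum>n<N 0. th 0 n * cvec pr Dl 0 n * sE 0 n)\<^sup>2 / (\<Sum>n<N 0. cvec pr Dl 0 n * sE 0 n))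
   + lam 1 * PH 1 * (\<Sum>n<N 1. cvec pr Dl 1 n * sD 1 n)"
  using Dtil_eq[of 0] by simp

lemma Dtil1: "Dtil N th pr Dl PH lam mu 1 sD sE =
   mu 1 * PH 1 * ((\<Sum>n<N 1. (th 1 n)\<^sup>2 * cvec pr Dl 1 n * sE 1 n) - (\<Sum>n<N 1. th 1 n * cvec pr Dl 1 n * sE 1 n)\<^sup>2 / (\<Sum>n<N 1. cvec pr Dl 1 n * sE 1 n))
   + lam 0 * PH 0 * (\<Sum>n<N 0. cvec pr Dl 0 n * sD 0 n)"
  using Dtil_eq[of 1] by simp

lemma comb:
  fixes a0 a1 b0 b1 c0 c1 dv :: real
  shows "a1 \<le> b1 \<Longrightarrow> a0 \<le> b0 \<Longrightarrow> 0 \<le> dv \<Longrightarrow> dv \<le> 1 \<Longrightarrow>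
    dv * (a1 + c1) + (1 - dv) * (a0 + c0) \<le> dv * (b1 + c1) + (1 - dv) * (b0 + c0)"
  by (intro add_mono mult_left_mono) auto

lemma pw_le:
  fixes sD sE :: "nat \<Rightarrow> nat \<Rightarrow> real"
  assumes PHn: "\<forall>i<2. 0 \<le> PH i" and mun: "\<forall>i<2. 0 \<le> mu i"
    and cn: "\<forall>i<2. \<forall>n<N i. 0 \<le> cvec pr Dl i n" and sEn: "\<forall>i<2. \<forall>n<N i. 0 \<le> sE i n"
    and dv: "0 \<le> dv" "dv \<le> 1"
  shows "rho_NP N th pr Dl PH lam mu sD sE \<le> GP N th pr Dl PH lam mu dv e sD sE"
proof -
  have V: "(\<Sum>n<N i. (th i n)\<^sup>2 * cvec pr Dl i n * sE i n) - (\<Sum>n<N i. th i n * cvec pr Dl i n * sE i n)\<^sup>2 / (\<Sum>n<N i. cvec pr Dl i n * sE i n)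
      \<le> (\<Sum>n<N i. cvec pr Dl i n * ((e i - th i n)\<^sup>2 * sE i n))" if "i < 2" for i
    using cn sEn that by (intro var_min(1)) auto
  have m0: "0 \<le> mu 0 * PH 0" and m1: "0 \<le> mu 1 * PH 1" using PHn mun by auto
  have V0: "mu 0 * PH 0 * ((\<Sum>n<N 0. (th 0 n)\<^sup>2 * cvec pr Dl 0 n * sE 0 n) - (\<Sum>n<N 0. th 0 n * cvec pr Dl 0 n * sE 0 n)\<^sup>2 / (\<Sum>n<N 0. cvec pr Dl 0 n * sE 0 n))
     \<le> mu 0 * PH 0 * (\<Sum>n<N 0. cvec pr Dl 0 n * ((e 0 - th 0 n)\<^sup>2 * sE 0 n))"
    by (rule mult_left_mono[OF V m0]) simp
  have V1: "mu 1 * PH 1 * ((\<Sum>n<N 1. (th 1 n)\<^sup>2 * cvec pr Dl 1 n * sE 1 n) - (\<Sum>n<N 1. th 1 n * cvec pr Dl 1 n * sE 1 n)\<^sup>2 / (\<Sum>n<N 1. cvec pr Dl 1 n * sE 1 n))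
     \<le> mu 1 * PH 1 * (\<Sum>n<N 1. cvec pr Dl 1 n * ((e 1 - th 1 n)\<^sup>2 * sE 1 n))"
    by (rule mult_left_mono[OF V m1]) simp
  define D0 where "D0 = Dtil N th pr Dl PH lam mu 0 sD sE"
  define D1 where "D1 = Dtil N th pr Dl PH lam mu 1 sD sE"
  have "dv * D1 + (1 - dv) * D0 \<le> GP N th pr Dl PH lam mu dv e sD sE"
    unfolding GP_eq D0_def D1_def Dtil0 Dtil1
    by (rule comb[OF V1 V0 dv])
  moreover have "min D0 D1 \<le> dv * D1 + (1 - dv) * D0"
  proof -
    have "dv * min D0 D1 \<le> dv * D1" "(1 - dv) * min D0 D1 \<le> (1 - dv) * D0"
      using dv by (auto intro: mult_left_mono)
    then show ?thesis by (simp add: algebra_simps)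
  qed
  ultimately show ?thesis unfolding rho_NP_def D0_def D1_def by linarith
qed

lemma pw_eq:
  fixes sD sE :: "nat \<Rightarrow> nat \<Rightarrow> real"
  assumes cn: "\<forall>i<2. \<forall>n<N i. 0 \<le> cvec pr Dl i n" and sEn: "\<forall>i<2. \<forall>n<N i. 0 \<le> sE i n"
    and dv: "dv = (if Dtil N th pr Dl PH lam mu 1 sD sE \<le> Dtil N th pr Dl PH lam mu 0 sD sE then 1 else 0)"
    and e: "\<forall>i<2. e i = (\<Sum>n<N i. bvec th pr Dl i n * sE i n) / (\<Sum>n<N i. cvec pr Dl i n * sE i n)"
  shows "GP N th pr Dl PH lam mu dv e sD sE = rho_NP N th pr Dl PH lam mu sD sE"
proof -
  have V: "(\<Sum>n<N i. (th i n)\<^sup>2 * cvec pr Dl i n * sE i n) - (\<Sum>n<N i. th i n * cvec pr Dl i n * sE i n)\<^sup>2 / (\<Sum>n<N i. cvec pr Dl i n * sE i n)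
      = (\<Sum>n<N i. cvec pr Dl i n * ((e i - th i n)\<^sup>2 * sE i n))" if "i < 2" for i
  proof -
    have "e i = (\<Sum>n<N i. th i n * cvec pr Dl i n * sE i n) / (\<Sum>n<N i. cvec pr Dl i n * sE i n)"
      using e that unfolding bvec_def cvec_def by (simp add: mult.assoc)
    then show ?thesis using cn sEn that by (simp only:) (intro var_min(2), auto)
  qed
  show ?thesis
    unfolding GP_eq rho_NP_def Dtil0 Dtil1
    using V[of 0] V[of 1] unfolding dv Dtil0 Dtil1
    by (simp add: min_def)
qed


lemma wmean_bound:
  fixes w t :: "nat \<Rightarrow> real"
  assumes w: "\<forall>n<K. 0 \<le> w n"
  shows "\<bar>(\<Sum>n<K. t n * w n) / (\<Sum>n<K. w n)\<bar> \<le> (\<Sum>n<K. \<bar>t n\<bar>)"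
proof -
  define T where "T = (\<Sum>n<K. \<bar>t n\<bar>)"
  have T0: "0 \<le> T" unfolding T_def by (intro sum_nonneg) auto
  have tT: "\<bar>t n\<bar> \<le> T" if "n < K" for n
    unfolding T_def using that by (intro member_le_sum) auto
  have W0: "0 \<le> (\<Sum>n<K. w n)" using w by (intro sum_nonneg) auto
  have "\<bar>\<Sum>n<K. t n * w n\<bar> \<le> (\<Sum>n<K. \<bar>t n * w n\<bar>)" by (rule sum_abs)
  also have "\<dots> \<le> (\<Sum>n<K. T * w n)"
    using w tT by (intro sum_mono) (auto simp: abs_mult intro: mult_right_mono)
  also have "\<dots> = T * (\<Sum>n<K. w n)" by (simp add: sum_distrib_left)
  finally have b: "\<bar>\<Sum>n<K. t n * w n\<bar> \<le> T * (\<Sum>n<K. w n)" .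
  show ?thesis
  proof (cases "(\<Sum>n<K. w n) = 0")
    case True then show ?thesis using T0 unfolding T_def by simp
  next
    case False
    then have "0 < (\<Sum>n<K. w n)" using W0 by simp
    then show ?thesis using b unfolding T_def[symmetric] by (simp add: abs_div pos_divide_le_eq)
  qed
qed

lemma Jmin_eq:
  fixes PD PE :: "nat \<Rightarrow> nat \<Rightarrow> 'a::euclidean_space \<Rightarrow> real"
  assumes PHn: "\<forall>i<2. 0 \<le> PH i" and lamn: "\<forall>i<2. 0 \<le> lam i" and mun: "\<forall>i<2. 0 \<le> mu i"
    and Dlp: "\<forall>i<2. 0 < Dl i" and prn: "\<forall>i<2. \<forall>n<N i. 0 \<le> pr i n"
    and dens: "\<forall>i<2. \<forall>n<N i. is_density (PD i n) \<and> is_density (PE i n)"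
  shows "J_min N th pr Dl PH lam mu PD PE = D_rho_NP N th pr Dl PH lam mu PD PE"
proof -
  have cn: "\<forall>i<2. \<forall>n<N i. 0 \<le> cvec pr Dl i n"
    using Dlp prn unfolding cvec_def by auto
  have mPD: "PD i n \<in> borel_measurable lborel" and mPE: "PE i n \<in> borel_measurable lborel"
    and iPD: "integrable lborel (PD i n)" and iPE: "integrable lborel (PE i n)"
    and nPD: "\<And>x. 0 \<le> PD i n x" and nPE: "\<And>x. 0 \<le> PE i n x"
    if "i < 2" "n < N i" for i n
    using dens that unfolding is_density_def by auto
  define rho where "rho x = rho_NP N th pr Dl PH lam mu (\<lambda>i n. PD i n x) (\<lambda>i n. PE i n x)" for x
  define Gf where "Gf d est x = (\<Sum>i<2. \<Sum>n<N i. PH i * lam i * cvec pr Dl i n * (acc d i x * PD i n x)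
       + PH i * mu i * cvec pr Dl i n * ((1 - acc d i x) * (est i x - th i n)\<^sup>2 * PE i n x))"
    for d :: "'a \<Rightarrow> real" and est x
  have Gf_GP: "Gf d est x = GP N th pr Dl PH lam mu (d x) (\<lambda>i. est i x) (\<lambda>i n. PD i n x) (\<lambda>i n. PE i n x)"
    for d est x unfolding Gf_def GP_def acc_def ..
  have J: "integrable lborel (Gf d est) \<and> J_NP N th pr Dl PH lam mu d est PD PE = (LINT x|lborel. Gf d est x)"
    if adm: "admissible N th PD PE d est" for d est
  proof -
    have i1: "integrable lborel (\<lambda>x. acc d i x * PD i n x)"
      and i2: "integrable lborel (\<lambda>x. (1 - acc d i x) * (est i x - th i n)\<^sup>2 * PE i n x)"
      if "i \<in> {..<2}" "n \<in> {..<N i}" for i n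
      using adm that unfolding admissible_def by auto
    have ii: "integrable lborel (\<lambda>x. \<Sum>n<N i. PH i * lam i * cvec pr Dl i n * (acc d i x * PD i n x)
       + PH i * mu i * cvec pr Dl i n * ((1 - acc d i x) * (est i x - th i n)\<^sup>2 * PE i n x))"
      if "i \<in> {..<2}" for i
      using i1 i2 that by (auto intro!: Bochner_Integration.integrable_sum integrable_add integrable_mult_right)
    have "integrable lborel (Gf d est)" unfolding Gf_def by (rule Bochner_Integration.integrable_sum) (rule ii)
    moreover have "(LINT x|lborel. Gf d est x) = J_NP N th pr Dl PH lam mu d est PD PE"
    proof -
      have "(LINT x|lborel. Gf d est x) = (\<Sum>i<2. LINT x|lborel. (\<Sum>n<N i. PH i * lam i * cvec pr Dl i n * (acc d i x * PD i n x)
       + PH i * mu i * cvec pr Dl i n * ((1 - acc d i x) * (est i x - th i n)\<^sup>2 * PE i n x)))"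
        unfolding Gf_def by (rule Bochner_Integration.integral_sum) (rule ii)
      also have "\<dots> = J_NP N th pr Dl PH lam mu d est PD PE"
        unfolding J_NP_def alpha_err_def beta_err_def
      proof (rule sum.cong[OF refl])
        fix i :: nat assume i: "i \<in> {..<2}"
        have "(LINT x|lborel. (\<Sum>n<N i. PH i * lam i * cvec pr Dl i n * (acc d i x * PD i n x)
           + PH i * mu i * cvec pr Dl i n * ((1 - acc d i x) * (est i x - th i n)\<^sup>2 * PE i n x)))
          = (\<Sum>n<N i. LINT x|lborel. PH i * lam i * cvec pr Dl i n * (acc d i x * PD i n x)
           + PH i * mu i * cvec pr Dl i n * ((1 - acc d i x) * (est i x - th i n)\<^sup>2 * PE i n x))"
          by (rule Bochner_Integration.integral_sum) (use i1 i2 i in \<open>auto intro!: integrable_add integrable_mult_right\<close>)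
        also have "\<dots> = (\<Sum>n<N i. PH i * lam i * cvec pr Dl i n * (LINT x|lborel. acc d i x * PD i n x)
           + PH i * mu i * cvec pr Dl i n * (LINT x|lborel. (1 - acc d i x) * (est i x - th i n)\<^sup>2 * PE i n x))"
        proof (rule sum.cong[OF refl])
          fix n assume n: "n \<in> {..<N i}"
          show "(LINT x|lborel. PH i * lam i * cvec pr Dl i n * (acc d i x * PD i n x)
           + PH i * mu i * cvec pr Dl i n * ((1 - acc d i x) * (est i x - th i n)\<^sup>2 * PE i n x))
            = PH i * lam i * cvec pr Dl i n * (LINT x|lborel. acc d i x * PD i n x)
           + PH i * mu i * cvec pr Dl i n * (LINT x|lborel. (1 - acc d i x) * (est i x - th i n)\<^sup>2 * PE i n x)"
            using i1[OF i n] i2[OF i n]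
            by (subst Bochner_Integration.integral_add) (auto intro!: integrable_mult_right)
        qed
        also have "\<dots> = PH i * (lam i * (\<Sum>n<N i. cvec pr Dl i n * (LINT x|lborel. acc d i x * PD i n x))
          + mu i * (\<Sum>n<N i. cvec pr Dl i n * (LINT x|lborel. (1 - acc d i x) * (est i x - th i n)\<^sup>2 * PE i n x)))"
          by (simp add: sum_distrib_left sum.distrib algebra_simps)
        finally show "(LINT x|lborel. (\<Sum>n<N i. PH i * lam i * cvec pr Dl i n * (acc d i x * PD i n x)
           + PH i * mu i * cvec pr Dl i n * ((1 - acc d i x) * (est i x - th i n)\<^sup>2 * PE i n x)))
          = PH i * (lam i * (\<Sum>n<N i. cvec pr Dl i n * (LINT x|lborel. acc d i x * PD i n x))
          + mu i * (\<Sum>n<N i. cvec pr Dl i n * (LINT x|lborel. (1 - acc d i x) * (est i x - th i n)\<^sup>2 * PE i n x)))" .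
      qed
      finally show ?thesis .
    qed
    ultimately show ?thesis by simp
  qed
  have low: "rho x \<le> Gf d est x" if adm: "admissible N th PD PE d est" for d est x
    unfolding rho_def Gf_GP
    using adm PHn mun cn nPE unfolding admissible_def by (intro pw_le) auto
  define Dt where "Dt i x = Dtil N th pr Dl PH lam mu i (\<lambda>i n. PD i n x) (\<lambda>i n. PE i n x)" for i x
  define d0 where "d0 x = (if Dt 1 x \<le> Dt 0 x then 1 else (0::real))" for x
  define e0 where "e0 i x = (\<Sum>n<N i. bvec th pr Dl i n * PE i n x) / (\<Sum>n<N i. cvec pr Dl i n * PE i n x)" for i x
  have mDt: "Dt i \<in> borel_measurable lborel" if "i < 2" for i
  proof -
    have "i = 0 \<or> i = 1" using that by auto
    then show ?thesis unfolding Dt_def Dtil_def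
      by (auto intro!: borel_measurable_add borel_measurable_diff borel_measurable_times
          borel_measurable_divide borel_measurable_sum borel_measurable_power mPD[unfolded measurable_lborel2] mPE[unfolded measurable_lborel2])
  qed
  have mD0[measurable]: "Dt 0 \<in> borel_measurable lborel" and mD1[measurable]: "Dt 1 \<in> borel_measurable lborel"
    using mDt by auto
  have md0: "d0 \<in> borel_measurable lborel" unfolding d0_def by measurable
  have me0: "e0 i \<in> borel_measurable lborel" if "i < 2" for i
    unfolding e0_def using that
    by (auto intro!: borel_measurable_times borel_measurable_divide borel_measurable_sum mPE[unfolded measurable_lborel2])
  have adm0: "admissible N th PD PE d0 e0"
    unfolding admissible_def
  proof (intro conjI allI impI)
    show "d0 \<in> borel_measurable lborel" by (rule md0)
    fix x show "0 \<le> d0 x" "d0 x \<le> 1" unfolding d0_def by auto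
  next
    fix i :: nat assume "i < 2" then show "e0 i \<in> borel_measurable lborel" by (rule me0)
  next
    fix i n assume i: "i < 2" and n: "n < N i"
    have macc: "(\<lambda>x. acc d0 i x) \<in> borel_measurable lborel"
      unfolding acc_def using md0 by (cases "i = 0") auto
    show "integrable lborel (\<lambda>x. acc d0 i x * PD i n x)"
    proof (rule Bochner_Integration.integrable_bound[OF iPD[OF i n]])
      show "(\<lambda>x. acc d0 i x * PD i n x) \<in> borel_measurable lborel"
        using macc mPD[OF i n] by (rule borel_measurable_times)
      show "AE x in lborel. norm (acc d0 i x * PD i n x) \<le> norm (PD i n x)"
        using nPD[OF i n] by (auto simp: acc_def d0_def abs_mult)
    qed
    define T where "T = (\<Sum>m<N i. \<bar>th i m\<bar>)"
    have tT: "\<bar>th i n\<bar> \<le> T" unfolding T_def using n by (intro member_le_sum) auto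
    have eT: "\<bar>e0 i x\<bar> \<le> T" for x
    proof -
      have "e0 i x = (\<Sum>m<N i. th i m * (cvec pr Dl i m * PE i m x)) / (\<Sum>m<N i. cvec pr Dl i m * PE i m x)"
        unfolding e0_def bvec_def cvec_def by (simp add: mult.assoc)
      also have "\<bar>\<dots>\<bar> \<le> T" unfolding T_def
        using cn nPE i by (intro wmean_bound) auto
      finally show ?thesis .
    qed
    have sq: "(e0 i x - th i n)\<^sup>2 \<le> (2 * T)\<^sup>2" for x
    proof -
      have "\<bar>e0 i x - th i n\<bar> \<le> 2 * T" using eT[of x] tT by linarith
      then have "\<bar>e0 i x - th i n\<bar>\<^sup>2 \<le> (2 * T)\<^sup>2" by (intro power_mono) auto
      then show ?thesis by simp
    qed
    show "integrable lborel (\<lambda>x. (1 - acc d0 i x) * (e0 i x - th i n)\<^sup>2 * PE i n x)"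
    proof (rule Bochner_Integration.integrable_bound[OF integrable_mult_right[OF iPE[OF i n], of "(2 * T)\<^sup>2"]])
      show "(\<lambda>x. (1 - acc d0 i x) * (e0 i x - th i n)\<^sup>2 * PE i n x) \<in> borel_measurable lborel"
        using macc me0[OF i] mPE[OF i n]
        by (intro borel_measurable_times borel_measurable_diff borel_measurable_power) auto
      show "AE x in lborel. norm ((1 - acc d0 i x) * (e0 i x - th i n)\<^sup>2 * PE i n x) \<le> norm ((2 * T)\<^sup>2 * PE i n x)"
      proof (intro AE_I2)
        fix x
        have a: "0 \<le> 1 - acc d0 i x" "1 - acc d0 i x \<le> 1" by (auto simp: acc_def d0_def)
        have p: "0 \<le> PE i n x" by (rule nPE[OF i n])
        have "(1 - acc d0 i x) * (e0 i x - th i n)\<^sup>2 * PE i n x \<le> 1 * (e0 i x - th i n)\<^sup>2 * PE i n x"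
          using a p by (intro mult_right_mono mult_right_mono) auto
        also have "\<dots> \<le> (2 * T)\<^sup>2 * PE i n x" using sq[of x] p by (simp add: mult_right_mono)
        finally show "norm ((1 - acc d0 i x) * (e0 i x - th i n)\<^sup>2 * PE i n x) \<le> norm ((2 * T)\<^sup>2 * PE i n x)"
          using a p by simp
      qed
    qed
  qed
  have Geq: "Gf d0 e0 x = rho x" for x
    unfolding Gf_GP rho_def
    using cn nPE by (intro pw_eq) (auto simp: d0_def Dt_def e0_def)
  have irho: "integrable lborel rho"
  proof -
    have "Gf d0 e0 = rho" by (rule ext) (rule Geq)
    then show ?thesis using J[OF adm0] by simp
  qed
  have Jopt: "J_NP N th pr Dl PH lam mu d0 e0 PD PE = (LINT x|lborel. rho x)"
    using J[OF adm0] Geq by simp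
  have Jge: "(LINT x|lborel. rho x) \<le> J_NP N th pr Dl PH lam mu d est PD PE"
    if "admissible N th PD PE d est" for d est
    using J[OF that] low[OF that] irho by (auto intro!: integral_mono)
  have "J_min N th pr Dl PH lam mu PD PE = (LINT x|lborel. rho x)"
    unfolding J_min_def
  proof (rule cInf_eq_minimum)
    show "(LINT x|lborel. rho x) \<in> (\<lambda>p. J_NP N th pr Dl PH lam mu (fst p) (snd p) PD PE) ` {(d, est). admissible N th PD PE d est}"
      using adm0 Jopt by (intro image_eqI[of _ _ "(d0, e0)"]) auto
    fix y assume "y \<in> (\<lambda>p. J_NP N th pr Dl PH lam mu (fst p) (snd p) PD PE) ` {(d, est). admissible N th PD PE d est}"
    then show "(LINT x|lborel. rho x) \<le> y" using Jge by auto
  qed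
  then show ?thesis unfolding D_rho_NP_def rho_def .
qed

theorem corollary2:
  fixes N :: "nat \<Rightarrow> nat" and th pr :: "nat \<Rightarrow> nat \<Rightarrow> real" and Dl PH lam mu :: "nat \<Rightarrow> real"
    and U :: "nat \<Rightarrow> nat \<Rightarrow> ('a::euclidean_space \<Rightarrow> real) set"
    and QD QE :: "nat \<Rightarrow> nat \<Rightarrow> 'a \<Rightarrow> real"
  assumes PH_nonneg: "\<forall>i<2. 0 \<le> PH i" and PH_sum: "PH 0 + PH 1 = 1"
    and lam_nonneg: "\<forall>i<2. 0 \<le> lam i" and mu_nonneg: "\<forall>i<2. 0 \<le> mu i"
    and N_pos: "\<forall>i<2. 1 \<le> N i"
    and Dl_pos: "\<forall>i<2. 0 < Dl i"
    and grid: "\<forall>i<2. \<forall>n. Suc n < N i \<longrightarrow> th i (Suc n) = th i n + Dl i"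
    and prior_nonneg: "\<forall>i<2. \<forall>n<N i. 0 \<le> pr i n"
    and U_convex: "\<forall>i<2. \<forall>n<N i. convex_fun_set (U i n)"
    and U_dens: "\<forall>i<2. \<forall>n<N i. \<forall>p\<in>U i n. is_density p"
    and Q_in: "in_unc N U QD QE"
  shows "(\<forall>PD PE. in_unc N U PD PE \<longrightarrow>
            J_min N th pr Dl PH lam mu PD PE \<le> J_min N th pr Dl PH lam mu QD QE)
     \<longleftrightarrow> (\<forall>PD PE. in_unc N U PD PE \<longrightarrow>
            D_rho_NP N th pr Dl PH lam mu PD PE \<le> D_rho_NP N th pr Dl PH lam mu QD QE)"
proof -
  have key: "J_min N th pr Dl PH lam mu PD PE = D_rho_NP N th pr Dl PH lam mu PD PE"
    if "in_unc N U PD PE" for PD PE :: "nat \<Rightarrow> nat \<Rightarrow> 'a \<Rightarrow> real"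
    using that PH_nonneg lam_nonneg mu_nonneg Dl_pos prior_nonneg U_dens
    unfolding in_unc_def by (intro Jmin_eq) auto
  show ?thesis using key Q_in by auto
qed

end
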